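(* Let $c\ge0$, $d>0$, $\beta\ge0$, $\alpha\in\mathbb{R}$ and $p_{(\alpha,\beta)}(\omega):=(\alpha-\omega^2)(c-id\omega-\omega^2)-\beta\omega^2$. Then: (i) If $\alpha<0$, then $p_{(\alpha,\beta)}$ has at least two roots of the form $i\mu$, $\mu\in\mathbb{R}$, where $\mu>0$ for exactly one root and $\mu\le0$ ($\mu<0$ if $c>0$) for at least one root. (ii) If $\alpha>0$, then all roots of $p_{(\alpha,\beta)}$ of the form $i\mu$, $\mu\in\mathbb{R}$, satisfy $\mu\le0$ ($\mu<0$ if $c>0$). If $d<2\sqrt{c}$ there is no purely imaginary root, and if $d\ge2\sqrt{\beta+c}$ there are at least two purely imaginary roots. *)

theory Defs
  imports Complex_Main "HOL-Computational_Algebra.Polynomial"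
begin

definition ppoly :: "real \<Rightarrow> real \<Rightarrow> real \<Rightarrow> real \<Rightarrow> complex poly" where
  "ppoly c d \<alpha> \<beta> =
     [:complex_of_real \<alpha>, 0, -1:] * [:complex_of_real c, - \<i> * complex_of_real d, -1:]
     - [:0, 0, complex_of_real \<beta>:]"

end

theory Submission
  imports Defs
begin

lemma polyq: "poly (ppoly c d a b) (\<i> * complex_of_real m) =
  complex_of_real ((a + m^2) * (m^2 + d*m + c) + b * m^2)"
  by (simp add: ppoly_def complex_eq_iff algebra_simps power2_eq_square)

lemma uniq:
  fixes c d a b m n :: real
  assumes "c \<ge> 0" "d > 0" "b \<ge> 0" "0 < m" "m < n"
    "(a + m^2) * (m^2 + d*m + c) + b * m^2 = 0"
  shows "(a + n^2) * (n^2 + d*n + c) + b * n^2 \<noteq> 0"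
proof
  assume h: "(a + n^2) * (n^2 + d*n + c) + b * n^2 = 0"
  define Dm where "Dm = m^2 + d*m + c"
  define Dn where "Dn = n^2 + d*n + c"
  have Dm: "Dm > 0" using assms by (simp add: Dm_def add_pos_nonneg)
  have Dn: "Dn > 0" using assms by (simp add: Dn_def add_pos_nonneg)
  have e1: "a + m^2 + b*m^2/Dm = 0" using assms(6) Dm unfolding Dm_def[symmetric]
    by (simp add: field_simps)
  have e2: "a + n^2 + b*n^2/Dn = 0" using h Dn unfolding Dn_def[symmetric]
    by (simp add: field_simps)
  have k: "d*m*n*(m-n) + c*(m^2-n^2) < 0"
  proof -
    have "d*m*n*(m-n) < 0" using assms by (simp add: mult_pos_neg)
    moreover have "c*(m^2-n^2) \<le> 0" using assms
      by (simp add: mult_nonneg_nonpos power_strict_mono less_imp_le)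
    ultimately show ?thesis by linarith
  qed
  have "m^2 * Dn \<le> n^2 * Dm"
    using k unfolding Dm_def Dn_def by (simp add: algebra_simps power2_eq_square)
  hence "m^2/Dm \<le> n^2/Dn" using Dm Dn by (simp add: divide_simps mult.commute)
  hence "b*m^2/Dm \<le> b*n^2/Dn" using assms(3)
    by (metis mult_left_mono times_divide_eq_right)
  moreover have "m^2 < n^2" using assms by (simp add: power_strict_mono)
  ultimately show False using e1 e2 by linarith
qed

lemma ivt_up:
  fixes q :: "real \<Rightarrow> real"
  assumes "continuous_on {a..b} q" "a \<le> b" "q a \<le> 0" "0 \<le> q b"
  shows "\<exists>x. a \<le> x \<and> x \<le> b \<and> q x = 0"
  using IVT'[of q a 0 b] assms by auto

lemma ivt_down:
  fixes q :: "real \<Rightarrow> real"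
  assumes "continuous_on {a..b} q" "a \<le> b" "0 \<le> q a" "q b \<le> 0"
  shows "\<exists>x. a \<le> x \<and> x \<le> b \<and> q x = 0"
  using IVT2'[of q b 0 a] assms by auto

theorem lemma3p1:
  fixes c d \<alpha> \<beta> :: real
  assumes "c \<ge> 0" and "d > 0" and "\<beta> \<ge> 0"
  defines "P \<equiv> ppoly c d \<alpha> \<beta>"
  shows "(\<alpha> < 0 \<longrightarrow>
            (\<exists>!\<mu>. \<mu> > 0 \<and> poly P (\<i> * complex_of_real \<mu>) = 0)
          \<and> (\<exists>\<mu>. \<mu> \<le> 0 \<and> poly P (\<i> * complex_of_real \<mu>) = 0)
          \<and> (c > 0 \<longrightarrow> (\<exists>\<mu>. \<mu> < 0 \<and> poly P (\<i> * complex_of_real \<mu>) = 0)))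
       \<and> (\<alpha> > 0 \<longrightarrow>
            (\<forall>\<mu>. poly P (\<i> * complex_of_real \<mu>) = 0 \<longrightarrow> \<mu> \<le> 0)
          \<and> (c > 0 \<longrightarrow> (\<forall>\<mu>. poly P (\<i> * complex_of_real \<mu>) = 0 \<longrightarrow> \<mu> < 0))
          \<and> (d < 2 * sqrt c \<longrightarrow> (\<forall>\<mu>. poly P (\<i> * complex_of_real \<mu>) \<noteq> 0))
          \<and> (d \<ge> 2 * sqrt (\<beta> + c) \<longrightarrow>
               (\<exists>\<mu>1 \<mu>2. poly P (\<i> * complex_of_real \<mu>1) = 0 \<and> poly P (\<i> * complex_of_real \<mu>2) = 0
                  \<and> (\<mu>1 \<noteq> \<mu>2 \<or> order (\<i> * complex_of_real \<mu>1) P \<ge> 2))))"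
proof -
  define q where "q = (\<lambda>m::real. (\<alpha> + m^2) * (m^2 + d*m + c) + \<beta> * m^2)"
  have PQ: "\<And>m. poly P (\<i> * complex_of_real m) = 0 \<longleftrightarrow> q m = 0"
    unfolding P_def q_def polyq by (simp only: of_real_eq_0_iff)
  have cont: "\<And>a b. continuous_on {a..b} q" unfolding q_def by (intro continuous_intros)
  have big: "q m > 0" if "m^2 > -\<alpha>" "m^2 + d*m + c > 0" for m
  proof -
    have "(\<alpha> + m^2) * (m^2 + d*m + c) > 0" using that by simp
    moreover have "\<beta> * m^2 \<ge> 0" using assms by simp
    ultimately show ?thesis unfolding q_def by linarith
  qed
  have I: "\<alpha> < 0 \<longrightarrow>
            (\<exists>!\<mu>. \<mu> > 0 \<and> q \<mu> = 0)
          \<and> (\<exists>\<mu>. \<mu> \<le> 0 \<and> q \<mu> = 0)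
          \<and> (c > 0 \<longrightarrow> (\<exists>\<mu>. \<mu> < 0 \<and> q \<mu> = 0))"
  proof
    assume a: "\<alpha> < 0"
    define s where "s = sqrt (-\<alpha>)"
    have s: "s \<ge> 0" "s^2 = -\<alpha>" using a by (auto simp: s_def)
    have qb: "q (s+1) > 0"
    proof (rule big)
      show "(s+1)^2 > -\<alpha>" using s by (simp add: power2_eq_square algebra_simps)
      show "(s+1)^2 + d*(s+1) + c > 0" using s assms
        by (simp add: add_pos_nonneg)
    qed
    have neg: "\<exists>\<mu>. \<mu> < 0 \<and> q \<mu> = 0" if cp: "c > 0"
    proof -
      define m where "m = -(s + d + 1)"
      have "q m > 0"
      proof (rule big)
        have "m^2 = s^2 + (d+1)*(2*s + d + 1)" unfolding m_def by (simp add: power2_eq_square algebra_simps)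
        moreover have "(d+1)*(2*s + d + 1) > 0" using s assms by simp
        ultimately show "m^2 > -\<alpha>" using s by linarith
        have "m^2 + d*m = (s+d+1)*(s+1)" unfolding m_def by (simp add: power2_eq_square algebra_simps)
        moreover have "(s+d+1)*(s+1) > 0" using s assms by simp
        ultimately show "m^2 + d*m + c > 0" using cp by linarith
      qed
      moreover have "q 0 < 0" using a cp unfolding q_def by (simp add: mult_neg_pos)
      ultimately obtain x where "m \<le> x" "x \<le> 0" "q x = 0"
        using ivt_down[OF cont, of m 0] s assms unfolding m_def by force
      moreover have "x \<noteq> 0" using \<open>q 0 < 0\<close> \<open>q x = 0\<close> by auto
      ultimately show ?thesis by (metis order.order_iff_strict)
    qed
    have ex: "\<exists>\<mu>. \<mu> > 0 \<and> q \<mu> = 0"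
    proof (cases "c > 0")
      case True
      have "q 0 < 0" using a True unfolding q_def by (simp add: mult_neg_pos)
      then obtain x where "0 \<le> x" "x \<le> s+1" "q x = 0"
        using ivt_up[OF cont, of 0 "s+1"] s qb by force
      moreover have "x \<noteq> 0" using \<open>q 0 < 0\<close> \<open>q x = 0\<close> by auto
      ultimately show ?thesis by (metis order.order_iff_strict)
    next
      case False
      hence c0: "c = 0" using assms by simp
      define r where "r = (\<lambda>m::real. (\<alpha> + m^2) * (m + d) + \<beta> * m)"
      have qr: "q m = m * r m" for m unfolding q_def r_def c0 by (simp add: power2_eq_square algebra_simps)
      have "r 0 < 0" unfolding r_def using a assms by (simp add: mult_neg_pos)
      moreover have "r (s+1) > 0" using qb qr[of "s+1"] s by (simp add: zero_less_mult_iff)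
      moreover have "continuous_on {0..s+1} r" unfolding r_def by (intro continuous_intros)
      ultimately obtain x where "0 \<le> x" "x \<le> s+1" "r x = 0"
        using ivt_up[of 0 "s+1" r] s by force
      moreover have "x \<noteq> 0" using \<open>r 0 < 0\<close> \<open>r x = 0\<close> by auto
      ultimately show ?thesis using qr by (metis order.order_iff_strict mult_zero_right)
    qed
    have un: "m = n" if "m > 0" "q m = 0" "n > 0" "q n = 0" for m n
      using uniq[OF assms(1,2,3), of m n \<alpha>] uniq[OF assms(1,2,3), of n m \<alpha>] that
      unfolding q_def by (metis linorder_neqE_linordered_idom)
    have nonpos: "\<exists>\<mu>. \<mu> \<le> 0 \<and> q \<mu> = 0"
    proof (cases "c > 0")
      case True then obtain x where "x < 0" "q x = 0" using neg by blast
      then show ?thesis by (metis less_imp_le)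
    next
      case False
      hence "c = 0" using assms by simp
      hence "q 0 = 0" unfolding q_def by simp
      then show ?thesis by auto
    qed
    show "(\<exists>!\<mu>. \<mu> > 0 \<and> q \<mu> = 0)
          \<and> (\<exists>\<mu>. \<mu> \<le> 0 \<and> q \<mu> = 0)
          \<and> (c > 0 \<longrightarrow> (\<exists>\<mu>. \<mu> < 0 \<and> q \<mu> = 0))"
      using ex un nonpos neg by blast
  qed
  have II: "\<alpha> > 0 \<longrightarrow>
            (\<forall>\<mu>. q \<mu> = 0 \<longrightarrow> \<mu> \<le> 0)
          \<and> (c > 0 \<longrightarrow> (\<forall>\<mu>. q \<mu> = 0 \<longrightarrow> \<mu> < 0))
          \<and> (d < 2 * sqrt c \<longrightarrow> (\<forall>\<mu>. q \<mu> \<noteq> 0))"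
  proof
    assume a: "\<alpha> > 0"
    have p: "q m > 0" if "m > 0" for m
    proof (rule big)
      show "m^2 > -\<alpha>" using a zero_le_power2[of m] by linarith
      show "m^2 + d*m + c > 0" using that assms by (simp add: add_pos_nonneg)
    qed
    have z: "q 0 > 0" if "c > 0" using a that unfolding q_def by simp
    have nr: "q m > 0" if "d < 2 * sqrt c" for m
    proof -
      have "d^2 < (2 * sqrt c)^2" using that assms by (intro power_strict_mono) auto
      also have "\<dots> = 4*c" using assms by (simp add: power_mult_distrib)
      finally have dd: "d^2 < 4*c" .
      have "m^2 + d*m + c = (m + d/2)^2 + (c - d^2/4)" by (simp add: power2_eq_square algebra_simps)
      moreover have "(m + d/2)^2 \<ge> 0" by simp
      ultimately have "m^2 + d*m + c > 0" using dd by linarith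
      moreover have "m^2 > -\<alpha>" using a zero_le_power2[of m] by linarith
      ultimately show ?thesis using big by blast
    qed
    show "(\<forall>\<mu>. q \<mu> = 0 \<longrightarrow> \<mu> \<le> 0)
          \<and> (c > 0 \<longrightarrow> (\<forall>\<mu>. q \<mu> = 0 \<longrightarrow> \<mu> < 0))
          \<and> (d < 2 * sqrt c \<longrightarrow> (\<forall>\<mu>. q \<mu> \<noteq> 0))"
      using p z nr by (metis less_irrefl linorder_not_le order_le_less)
  qed
  have III: "\<alpha> > 0 \<longrightarrow> d \<ge> 2 * sqrt (\<beta> + c) \<longrightarrow>
      (\<exists>\<mu>1 \<mu>2. q \<mu>1 = 0 \<and> q \<mu>2 = 0 \<and> (\<mu>1 \<noteq> \<mu>2 \<or> order (\<i> * complex_of_real \<mu>1) P \<ge> 2))"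
  proof (intro impI)
    assume a: "\<alpha> > 0" and dg: "d \<ge> 2 * sqrt (\<beta> + c)"
    define h where "h = -d/2"
    have "(2 * sqrt (\<beta> + c))^2 \<le> d^2" using dg assms by (intro power_mono) auto
    moreover have "(2 * sqrt (\<beta> + c))^2 = 4*(\<beta>+c)" using assms by (simp add: power_mult_distrib)
    ultimately have dd: "4*(\<beta>+c) \<le> d^2" by simp
    have hD: "h^2 + d*h + c = c - d^2/4" unfolding h_def by (simp add: power2_eq_square algebra_simps)
    have ah: "\<alpha> + h^2 > 0" using a zero_le_power2[of h] by linarith
    have le: "c - d^2/4 \<le> -\<beta>" using dd by (simp add: field_simps)
    have "(\<alpha> + h^2) * (c - d^2/4) \<le> (\<alpha> + h^2) * (-\<beta>)" using ah le by (intro mult_left_mono) auto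
    hence qh: "q h \<le> -\<alpha>*\<beta>" unfolding q_def hD by (simp add: algebra_simps)
    have q0: "q 0 \<ge> 0" unfolding q_def using a assms by simp
    show "\<exists>\<mu>1 \<mu>2. q \<mu>1 = 0 \<and> q \<mu>2 = 0 \<and> (\<mu>1 \<noteq> \<mu>2 \<or> order (\<i> * complex_of_real \<mu>1) P \<ge> 2)"
    proof (cases "q h < 0")
      case True
      define m where "m = -d-1"
      have qm: "q m > 0"
      proof (rule big)
        show "m^2 > -\<alpha>" using a zero_le_power2[of m] by linarith
        have "m^2 + d*m = d+1" unfolding m_def by (simp add: power2_eq_square algebra_simps)
        thus "m^2 + d*m + c > 0" using assms by linarith
      qed
      obtain x1 where x1: "m \<le> x1" "x1 \<le> h" "q x1 = 0"
        using ivt_down[OF cont, of m h] qm True assms unfolding m_def h_def by force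
      obtain x2 where x2: "h \<le> x2" "x2 \<le> 0" "q x2 = 0"
        using ivt_up[OF cont, of h 0] q0 True assms unfolding h_def by force
      have "x1 \<noteq> x2" using x1 x2 True by (metis order_antisym less_irrefl)
      thus ?thesis using x1 x2 by blast
    next
      case False
      have "\<alpha>*\<beta> \<ge> 0" using a assms by simp
      hence qh0: "q h = 0" using qh False by linarith
      hence ab: "\<alpha>*\<beta> \<le> 0" using qh by linarith
      have b0: "\<beta> = 0"
      proof (rule ccontr)
        assume "\<beta> \<noteq> 0"
        hence "\<beta> > 0" using assms by simp
        hence "\<alpha>*\<beta> > 0" using a by simp
        thus False using ab by simp
      qed
      hence "(\<alpha> + h^2) * (c - d^2/4) = 0" using qh0 unfolding q_def hD by simp
      hence c4: "c = d^2/4" using ah by simp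
      define z where "z = - \<i> * complex_of_real d / 2"
      have fac: "[:complex_of_real c, - \<i> * complex_of_real d, -1:] = smult (-1) ([:-z,1:]^2)"
        unfolding z_def c4 by (simp add: power2_eq_square algebra_simps complex_eq_iff)
      have Pf: "P = [:complex_of_real \<alpha>, 0, -1:] * smult (-1) ([:-z,1:]^2)"
        unfolding P_def ppoly_def fac b0 by simp
      have "P \<noteq> 0"
      proof
        assume "P = 0"
        hence "q 0 = 0" using PQ[of 0] by simp
        moreover have "q 0 > 0" unfolding q_def c4 using a assms by simp
        ultimately show False by simp
      qed
      moreover have "[:-z,1:]^2 dvd P" unfolding Pf by (intro dvd_mult dvd_smult dvd_refl)
      ultimately have "2 \<le> order z P" using order_divides by blast
      moreover have "\<i> * complex_of_real h = z" unfolding h_def z_def by (simp add: complex_eq_iff)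
      ultimately show ?thesis using qh0 by auto
    qed
  qed
  show ?thesis using I II III unfolding PQ by blast
qed
end
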